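(* Let $n\ge3$ and suppose $T=T_\lambda(r,m)$ acts linearly and inner faithfully on $\Bbbk\overline{Q}$ so that $g$ acts by a reflection: $g\cdot e_i=e_{n-(d+i)}$, $g\cdot a_i=\mu_ia^*_{n-(d+i+1)}$, $g\cdot a_i^*=\mu_i^*a_{n-(d+i+1)}$ for some integer $0<d\le n-1$ and $\mu_i,\mu_i^*\in\Bbbk^\times$. Let $\sigma$ be the quiver-Taft map. If $j$ is a vertex with $g\cdot j=j$ and $c_j,c_j^*\in\Bbbk$ satisfy $\sigma(a_j)=c_ja^*_{j-1}$ and $\sigma(a_j^* )=c_j^*a_j^*$, then $$c_j^2=\mu_j(\mu^*_{j-1})^{-1}\gamma_{j-1}^2,\qquad (c_j^* )^2=\mu_j^*\mu_{j-1}\gamma_{j-1}^2.$$ For every $i$ such that neither $i$ nor $i+1$ is fixed by $g$, $$\gamma_{i+1}^2=(\mu_i\mu^*_{n-(d+i+1)})\gamma_i^2=(\mu_i^*\mu_{n-(d+i+1)})^{-1}\gamma_i^2.$$ Consequently, either $\gamma_i=0$ for all $i$, or $\gamma_i\neq0$ for all $i$ with $g\cdot i\neq i$.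
   Context: Let $\Bbbk$ be a field, $r>1$ and $m$ positive integers with $r\mid m$, and $\lambda\in\Bbbk$ a primitive $r$-th root of unity, with $r$ coprime to the characteristic of $\Bbbk$. The generalized Taft algebra $T=T_\lambda(r,m)$ is the Hopf algebra generated by $g,x$ with relations $gx=\lambda xg$, $g^m=1$, $x^r=0$, $\Delta(g)=g\otimes g$, $\Delta(x)=1\otimes x+x\otimes g$, $\varepsilon(g)=1,\varepsilon(x)=0$, $S(g)=g^{-1}$, $S(x)=-xg^{-1}$. An action of $T$ on an algebra $A$ is a $T$-module algebra structure; so $g$ acts by an algebra automorphism and $x\cdot(ab)=a(x\cdot b)+(x\cdot a)(g\cdot b)$. It is inner faithful if no nonzero Hopf ideal $I$ of $T$ satisfies $I\cdot A=0$. Vertex indices are taken modulo $n$. $\overline{Q}$ has vertices $0,\dots,n-1$ and arrows $a_i:i\to i+1$, $a_i^*:i+1\to i$; in $\Bbbk\overline{Q}$, $e_i$ is the trivial path at $i$, $s(a),t(a)$ source and target, and $pq$ is concatenation ($p$ then $q$) if $t(p)=s(q)$, else $0$. A linear action: $g$ acts by a path-length-preserving automorphism ($g\cdot e_i=e_{g\cdot i}$) and $x$ maps vertices into the span of vertices and arrows into the span of vertices and arrows. Then there are scalars $\gamma_i$ with $x\cdot e_i=\gamma_ie_i-\gamma_i\lambda^{-1}e_{g\cdot i}$; the quiver-Taft map $\sigma$ is the linear map on the span of vertices and arrows with $\sigma(e_i)=0$ and $\sigma(a)=x\cdot a-\gamma_{t(a)}a+\gamma_{s(a)}\lambda^{-1}(g\cdot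 a)$ for arrows $a$. *)

theory Defs
  imports Main "HOL-Library.Function_Algebras"
begin

text \<open>Vertices are 0..n-1. Arr i is a_i : i -> i+1, ArrS i is a_i^* : i+1 -> i
  (indices modulo n). A path is a pair (start vertex, list of arrows); the trivial
  path e_v is (v, []). Concatenation is left-to-right (p then q).\<close>

datatype arr = Arr nat | ArrS nat

type_synonym path = "nat \<times> arr list"

fun aidx :: "arr \<Rightarrow> nat" where
  "aidx (Arr i) = i" | "aidx (ArrS i) = i"

fun asrc :: "nat \<Rightarrow> arr \<Rightarrow> nat" where
  "asrc n (Arr i) = i" | "asrc n (ArrS i) = (i + 1) mod n"

fun atgt :: "nat \<Rightarrow> arr \<Rightarrow> nat" where
  "atgt n (Arr i) = (i + 1) mod n" | "atgt n (ArrS i) = i"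

fun pend :: "nat \<Rightarrow> nat \<Rightarrow> arr list \<Rightarrow> nat" where
  "pend n v [] = v"
| "pend n v (a # as) = pend n (atgt n a) as"

fun pvalid :: "nat \<Rightarrow> nat \<Rightarrow> arr list \<Rightarrow> bool" where
  "pvalid n v [] = (v < n)"
| "pvalid n v (a # as) = (v < n \<and> aidx a < n \<and> asrc n a = v \<and> pvalid n (atgt n a) as)"

definition pq_carrier :: "nat \<Rightarrow> (path \<Rightarrow> 'k::field) set" where
  "pq_carrier n = {f. finite {p. f p \<noteq> 0} \<and> (\<forall>p. f p \<noteq> 0 \<longrightarrow> pvalid n (fst p) (snd p))}"

definition pq_mul :: "nat \<Rightarrow> (path \<Rightarrow> 'k::field) \<Rightarrow> (path \<Rightarrow> 'k) \<Rightarrow> (path \<Rightarrow> 'k)" where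
  "pq_mul n f h = (\<lambda>(v, as). \<Sum>k\<in>{0..length as}.
      f (v, take k as) * h (pend n v (take k as), drop k as))"

definition pq_one :: "nat \<Rightarrow> (path \<Rightarrow> 'k::field)" where
  "pq_one n = (\<lambda>(v, as). if as = [] \<and> v < n then 1 else 0)"

definition vtx :: "nat \<Rightarrow> (path \<Rightarrow> 'k::field)" where
  "vtx i = (\<lambda>p. if p = (i, []) then 1 else 0)"

definition arw :: "nat \<Rightarrow> arr \<Rightarrow> (path \<Rightarrow> 'k::field)" where
  "arw n a = (\<lambda>p. if p = (asrc n a, [a]) then 1 else 0)"

definition smul :: "'k::field \<Rightarrow> ('a \<Rightarrow> 'k) \<Rightarrow> ('a \<Rightarrow> 'k)" where
  "smul c f = (\<lambda>p. c * f p)"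

definition len_le :: "nat \<Rightarrow> (path \<Rightarrow> 'k::field) \<Rightarrow> bool" where
  "len_le l f \<longleftrightarrow> (\<forall>p. f p \<noteq> 0 \<longrightarrow> length (snd p) \<le> l)"

definition homog :: "nat \<Rightarrow> (path \<Rightarrow> 'k::field) \<Rightarrow> bool" where
  "homog l f \<longleftrightarrow> (\<forall>p. f p \<noteq> 0 \<longrightarrow> length (snd p) = l)"

definition lin_on :: "nat \<Rightarrow> ((path \<Rightarrow> 'k::field) \<Rightarrow> (path \<Rightarrow> 'k)) \<Rightarrow> bool" where
  "lin_on n F \<longleftrightarrow> (\<forall>f\<in>pq_carrier n. F f \<in> pq_carrier n)
     \<and> (\<forall>f\<in>pq_carrier n. \<forall>h\<in>pq_carrier n. F (f + h) = F f + F h)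
     \<and> (\<forall>c. \<forall>f\<in>pq_carrier n. F (smul c f) = smul c (F f))"

text \<open>A T_lambda(r,m)-module algebra structure on kQ is given by the actions G of g and
  X of x (T is presented by generators g, x and the relations gx = lambda xg, g^m = 1,
  x^r = 0); the module algebra axioms for the generators read
  g(ab) = g(a)g(b), g(1) = 1, x(ab) = a x(b) + x(a) g(b), x(1) = 0.\<close>
definition taft_module_algebra ::
  "nat \<Rightarrow> 'k::field \<Rightarrow> nat \<Rightarrow> nat \<Rightarrow> ((path \<Rightarrow> 'k) \<Rightarrow> (path \<Rightarrow> 'k))
     \<Rightarrow> ((path \<Rightarrow> 'k) \<Rightarrow> (path \<Rightarrow> 'k)) \<Rightarrow> bool" where
  "taft_module_algebra n lam r m G X \<longleftrightarrow>
     lin_on n G \<and> lin_on n X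
   \<and> (\<forall>f\<in>pq_carrier n. \<forall>h\<in>pq_carrier n. G (pq_mul n f h) = pq_mul n (G f) (G h))
   \<and> G (pq_one n) = pq_one n
   \<and> (\<forall>f\<in>pq_carrier n. \<forall>h\<in>pq_carrier n.
        X (pq_mul n f h) = pq_mul n f (X h) + pq_mul n (X f) (G h))
   \<and> X (pq_one n) = 0
   \<and> (\<forall>f\<in>pq_carrier n. G (X f) = smul lam (X (G f)))
   \<and> (\<forall>f\<in>pq_carrier n. (G ^^ m) f = f)
   \<and> (\<forall>f\<in>pq_carrier n. (X ^^ r) f = 0)"

definition linear_action ::
  "nat \<Rightarrow> ((path \<Rightarrow> 'k::field) \<Rightarrow> (path \<Rightarrow> 'k)) \<Rightarrow> ((path \<Rightarrow> 'k) \<Rightarrow> (path \<Rightarrow> 'k)) \<Rightarrow> bool" where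
  "linear_action n G X \<longleftrightarrow>
     (\<forall>f\<in>pq_carrier n. \<forall>l. homog l f \<longrightarrow> homog l (G f))
   \<and> (\<forall>i<n. \<exists>j<n. G (vtx i) = vtx j)
   \<and> (\<forall>i<n. len_le 0 (X (vtx i)))
   \<and> (\<forall>i<n. len_le 1 (X (arw n (Arr i))) \<and> len_le 1 (X (arw n (ArrS i))))"

text \<open>An element of T is the coefficient function of the basis g^a x^b, a<m, b<r.\<close>
type_synonym 'k taft = "nat \<times> nat \<Rightarrow> 'k"

definition tB :: "nat \<Rightarrow> nat \<Rightarrow> (nat \<times> nat) set" where
  "tB m r = {..<m} \<times> {..<r}"

definition tcar :: "nat \<Rightarrow> nat \<Rightarrow> ('k::field) taft set" where
  "tcar m r = {t. \<forall>p. p \<notin> tB m r \<longrightarrow> t p = 0}"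

text \<open>Structure constants: g^a1 x^b1 * g^a2 x^b2 = lambda^(-b1 a2) g^(a1+a2) x^(b1+b2).\<close>
fun tcoef :: "'k::field \<Rightarrow> nat \<Rightarrow> nat \<Rightarrow> nat \<times> nat \<Rightarrow> nat \<times> nat \<Rightarrow> nat \<times> nat \<Rightarrow> 'k" where
  "tcoef lam m r (a1, b1) (a2, b2) (a, b) =
     (if (a1 + a2) mod m = a \<and> b1 + b2 = b \<and> b < r then inverse lam ^ (b1 * a2) else 0)"

definition tmul :: "'k::field \<Rightarrow> nat \<Rightarrow> nat \<Rightarrow> 'k taft \<Rightarrow> 'k taft \<Rightarrow> 'k taft" where
  "tmul lam m r s t = (\<lambda>c. \<Sum>p\<in>tB m r. \<Sum>q\<in>tB m r. s p * t q * tcoef lam m r p q c)"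

definition tbas :: "nat \<times> nat \<Rightarrow> ('k::field) taft" where
  "tbas p = (\<lambda>q. if q = p then 1 else 0)"

definition tpow :: "'k::field \<Rightarrow> nat \<Rightarrow> nat \<Rightarrow> 'k taft \<Rightarrow> nat \<Rightarrow> 'k taft" where
  "tpow lam m r s k = (tmul lam m r s ^^ k) (tbas (0, 0))"

text \<open>T tensor T, with basis (g^a x^b) (x) (g^c x^e).\<close>
definition ttmul :: "'k::field \<Rightarrow> nat \<Rightarrow> nat \<Rightarrow> ((nat \<times> nat) \<times> (nat \<times> nat) \<Rightarrow> 'k)
    \<Rightarrow> ((nat \<times> nat) \<times> (nat \<times> nat) \<Rightarrow> 'k) \<Rightarrow> ((nat \<times> nat) \<times> (nat \<times> nat) \<Rightarrow> 'k)" where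
  "ttmul lam m r S U = (\<lambda>(c1, c2). \<Sum>P\<in>tB m r \<times> tB m r. \<Sum>Q\<in>tB m r \<times> tB m r.
      S P * U Q * tcoef lam m r (fst P) (fst Q) c1 * tcoef lam m r (snd P) (snd Q) c2)"

definition tten :: "('k::field) taft \<Rightarrow> 'k taft \<Rightarrow> ((nat \<times> nat) \<times> (nat \<times> nat) \<Rightarrow> 'k)" where
  "tten u v = (\<lambda>(p, q). u p * v q)"

definition ttpow :: "'k::field \<Rightarrow> nat \<Rightarrow> nat \<Rightarrow> ((nat \<times> nat) \<times> (nat \<times> nat) \<Rightarrow> 'k)
    \<Rightarrow> nat \<Rightarrow> ((nat \<times> nat) \<times> (nat \<times> nat) \<Rightarrow> 'k)" where
  "ttpow lam m r S k = (ttmul lam m r S ^^ k) (tten (tbas (0, 0)) (tbas (0, 0)))"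

text \<open>Comultiplication: Delta(g) = g (x) g, Delta(x) = 1 (x) x + x (x) g, extended
  multiplicatively: Delta(g^a x^b) = Delta(g)^a Delta(x)^b.\<close>
definition tcomul :: "'k::field \<Rightarrow> nat \<Rightarrow> nat \<Rightarrow> 'k taft \<Rightarrow> ((nat \<times> nat) \<times> (nat \<times> nat) \<Rightarrow> 'k)" where
  "tcomul lam m r t = (\<lambda>P. \<Sum>ab\<in>tB m r. t ab *
     ttmul lam m r
       (ttpow lam m r (tten (tbas (1 mod m, 0)) (tbas (1 mod m, 0))) (fst ab))
       (ttpow lam m r (tten (tbas (0, 0)) (tbas (0, 1)) + tten (tbas (0, 1)) (tbas (1 mod m, 0))) (snd ab))
       P)"

definition tcounit :: "nat \<Rightarrow> nat \<Rightarrow> ('k::field) taft \<Rightarrow> 'k" where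
  "tcounit m r t = (\<Sum>a<m. t (a, 0))"

text \<open>Antipode: S(g) = g^(-1) = g^(m-1), S(x) = - x g^(-1), S antimultiplicative:
  S(g^a x^b) = S(x)^b S(g)^a.\<close>
definition tanti :: "'k::field \<Rightarrow> nat \<Rightarrow> nat \<Rightarrow> 'k taft \<Rightarrow> 'k taft" where
  "tanti lam m r t = (\<lambda>c. \<Sum>ab\<in>tB m r. t ab *
     tmul lam m r
       (tpow lam m r (smul (-1) (tmul lam m r (tbas (0, 1)) (tbas ((m - 1) mod m, 0)))) (snd ab))
       (tpow lam m r (tbas ((m - 1) mod m, 0)) (fst ab)) c)"

definition tspan :: "nat \<Rightarrow> nat \<Rightarrow> ('k::field) taft set \<Rightarrow> ((nat \<times> nat) \<times> (nat \<times> nat) \<Rightarrow> 'k) set" where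
  "tspan m r I = {P. \<exists>xs. (\<forall>(u, v)\<in>set xs. (u \<in> I \<and> v \<in> tcar m r) \<or> (u \<in> tcar m r \<and> v \<in> I))
                        \<and> P = sum_list (map (\<lambda>(u, v). tten u v) xs)}"

definition hopf_ideal :: "'k::field \<Rightarrow> nat \<Rightarrow> nat \<Rightarrow> 'k taft set \<Rightarrow> bool" where
  "hopf_ideal lam m r I \<longleftrightarrow>
     I \<subseteq> tcar m r \<and> (\<lambda>_. 0) \<in> I
   \<and> (\<forall>s\<in>I. \<forall>t\<in>I. s + t \<in> I)
   \<and> (\<forall>c. \<forall>s\<in>I. smul c s \<in> I)
   \<and> (\<forall>s\<in>I. \<forall>t\<in>tcar m r. tmul lam m r s t \<in> I \<and> tmul lam m r t s \<in> I)
   \<and> (\<forall>s\<in>I. tcomul lam m r s \<in> tspan m r I)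
   \<and> (\<forall>s\<in>I. tcounit m r s = 0)
   \<and> (\<forall>s\<in>I. tanti lam m r s \<in> I)"

definition taft_act :: "nat \<Rightarrow> nat \<Rightarrow> ((path \<Rightarrow> 'k::field) \<Rightarrow> (path \<Rightarrow> 'k))
    \<Rightarrow> ((path \<Rightarrow> 'k) \<Rightarrow> (path \<Rightarrow> 'k)) \<Rightarrow> 'k taft \<Rightarrow> (path \<Rightarrow> 'k) \<Rightarrow> (path \<Rightarrow> 'k)" where
  "taft_act m r G X t f = (\<lambda>p. \<Sum>ab\<in>tB m r. t ab * (G ^^ fst ab) ((X ^^ snd ab) f) p)"

definition inner_faithful :: "nat \<Rightarrow> 'k::field \<Rightarrow> nat \<Rightarrow> nat
    \<Rightarrow> ((path \<Rightarrow> 'k) \<Rightarrow> (path \<Rightarrow> 'k)) \<Rightarrow> ((path \<Rightarrow> 'k) \<Rightarrow> (path \<Rightarrow> 'k)) \<Rightarrow> bool" where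
  "inner_faithful n lam r m G X \<longleftrightarrow>
     \<not> (\<exists>I. hopf_ideal lam m r I \<and> (\<exists>t\<in>I. t \<noteq> (\<lambda>_. 0))
            \<and> (\<forall>t\<in>I. \<forall>f\<in>pq_carrier n. taft_act m r G X t f = (\<lambda>_. 0)))"

definition rf :: "nat \<Rightarrow> nat \<Rightarrow> nat \<Rightarrow> nat" where
  "rf n d i = nat ((int n - int d - int i) mod int n)"

definition vpred :: "nat \<Rightarrow> nat \<Rightarrow> nat" where
  "vpred n j = (j + n - 1) mod n"

definition qsigma :: "nat \<Rightarrow> 'k::field \<Rightarrow> (nat \<Rightarrow> 'k) \<Rightarrow> ((path \<Rightarrow> 'k) \<Rightarrow> (path \<Rightarrow> 'k))
    \<Rightarrow> ((path \<Rightarrow> 'k) \<Rightarrow> (path \<Rightarrow> 'k)) \<Rightarrow> arr \<Rightarrow> (path \<Rightarrow> 'k)" where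
  "qsigma n lam \<gamma> G X a =
     X (arw n a) - smul (\<gamma> (atgt n a)) (arw n a) + smul (\<gamma> (asrc n a) * inverse lam) (G (arw n a))"

end

theory Submission
  imports Defs
begin


lemma rf_lt: "0 < n \<Longrightarrow> rf n d i < n"
  unfolding rf_def by (simp add: nat_less_iff)

lemma rf_char: "0 < n \<Longrightarrow> y < n \<Longrightarrow> (y = rf n d i) \<longleftrightarrow> int n dvd (int y + int d + int i)"
proof -
  assume n: "0 < n" and y: "y < n"
  have "int (rf n d i) = (int n - int d - int i) mod int n" unfolding rf_def using n by simp
  then have "(y = rf n d i) \<longleftrightarrow> int y = (int n - int d - int i) mod int n" by linarith
  also have "\<dots> \<longleftrightarrow> int y mod int n = (int n - int d - int i) mod int n" using y by simp
  also have "\<dots> \<longleftrightarrow> int n dvd (int y - (int n - int d - int i))" by (simp add: mod_eq_dvd_iff)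
  also have "int y - (int n - int d - int i) = (int y + int d + int i) + (-1) * int n" by simp
  also have "int n dvd \<dots> \<longleftrightarrow> int n dvd (int y + int d + int i)" by (rule dvd_add_times_triv_right_iff)
  finally show ?thesis .
qed

lemma rf_dvd: "0 < n \<Longrightarrow> int n dvd (int (rf n d i) + int d + int i)"
  using rf_char[of n "rf n d i" d i] rf_lt by blast

lemma rf_rf: "0 < n \<Longrightarrow> x < n \<Longrightarrow> rf n d (rf n d x) = x"
proof -
  assume n: "0 < n" and x: "x < n"
  have "int n dvd (int x + int d + int (rf n d x))" using rf_dvd[OF n, of d x] by (simp add: ac_simps)
  then show ?thesis using rf_char[OF n x, of d "rf n d x"] by simp
qed

lemma rf_mod: "0 < n \<Longrightarrow> rf n d (x mod n) = rf n d x"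
proof -
  assume n: "0 < n"
  have m: "int x mod int n = int x - int x div int n * int n" by (simp add: minus_div_mult_eq_mod)
  have e: "int (rf n d x) + int d + int (x mod n) = (int (rf n d x) + int d + int x) + (- (int x div int n)) * int n"
    by (simp only: of_nat_mod m)
  have "int n dvd (int (rf n d x) + int d + int (x mod n))"
    unfolding e dvd_add_times_triv_right_iff by (rule rf_dvd[OF n])
  then show ?thesis using rf_char[of n "rf n d x" d "x mod n"] rf_lt[OF n] by auto
qed

lemma rf_suc: "0 < n \<Longrightarrow> (rf n d (x + 1) + 1) mod n = rf n d x"
proof -
  assume n: "0 < n"
  let ?y = "(rf n d (x + 1) + 1) mod n"
  let ?z = "int (rf n d (x + 1)) + 1"
  have m: "?z mod int n = ?z - ?z div int n * int n" by (simp add: minus_div_mult_eq_mod)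
  have i: "int ?y = ?z mod int n" by (simp only: of_nat_mod of_nat_add of_nat_1)
  have e: "int ?y + int d + int x = (int (rf n d (x+1)) + int d + int (x+1)) + (- (?z div int n)) * int n"
    unfolding i m by simp
  have "int n dvd (int ?y + int d + int x)"
    unfolding e dvd_add_times_triv_right_iff by (rule rf_dvd[OF n])
  then show ?thesis using rf_char[of n ?y d x] n by auto
qed

lemma vpred_lt: "0 < n \<Longrightarrow> vpred n j < n" unfolding vpred_def by simp

lemma vpred_suc: "0 < n \<Longrightarrow> j < n \<Longrightarrow> (vpred n j + 1) mod n = j"
proof -
  assume n: "0 < n" and j: "j < n"
  have "(vpred n j + 1) mod n = (j + n - 1 + 1) mod n" unfolding vpred_def by (simp add: mod_Suc_eq)
  also have "j + n - 1 + 1 = j + n" using n by simp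
  also have "(j + n) mod n = j" using j by simp
  finally show ?thesis .
qed

lemma vpred_of_suc: "0 < n \<Longrightarrow> y < n \<Longrightarrow> vpred n ((y + 1) mod n) = y"
proof -
  assume n: "0 < n" and y: "y < n"
  show ?thesis
  proof (cases "y + 1 < n")
    case True then show ?thesis unfolding vpred_def by simp
  next
    case False then have "y + 1 = n" using y by simp
    then show ?thesis unfolding vpred_def using n by simp
  qed
qed

lemma rf_fix_suc: "0 < n \<Longrightarrow> j < n \<Longrightarrow> rf n d j = j \<Longrightarrow> rf n d (j + 1) = vpred n j"
proof -
  assume n: "0 < n" and j: "j < n" and f: "rf n d j = j"
  have "vpred n j = vpred n ((rf n d (j + 1) + 1) mod n)" using rf_suc[OF n, of d j] f by simp
  also have "\<dots> = rf n d (j + 1)" by (rule vpred_of_suc[OF n rf_lt[OF n]])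
  finally show ?thesis by simp
qed




lemma smul_apply[simp]: "smul c f p = c * f p" by (simp add: smul_def)
lemma vtx_apply: "vtx i (v, as) = (if v = i \<and> as = [] then 1 else 0)" by (simp add: vtx_def)
lemma arw_apply: "arw n a (v, as) = (if v = asrc n a \<and> as = [a] then 1 else 0)" by (simp add: arw_def)

lemma sum_single: "finite A \<Longrightarrow> a \<in> A \<Longrightarrow> (\<And>b. b \<in> A \<Longrightarrow> b \<noteq> a \<Longrightarrow> f b = 0) \<Longrightarrow> sum f A = f a"
  by (simp add: sum.remove sum.neutral)

lemma mul_vtx_left: "pq_mul n (vtx s) f (v, as) = (if v = s then f (v, as) else 0)"
proof -
  have "pq_mul n (vtx s) f (v, as) = (\<Sum>k\<in>{0..length as}. vtx s (v, take k as) * f (pend n v (take k as), drop k as))"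
    by (simp add: pq_mul_def)
  also have "\<dots> = vtx s (v, take 0 as) * f (pend n v (take 0 as), drop 0 as)"
    by (rule sum_single) (auto simp: vtx_apply)
  finally show ?thesis by (simp add: vtx_apply)
qed

lemma mul_vtx_right: "pq_mul n f (vtx t) (v, as) = (if pend n v as = t then f (v, as) else 0)"
proof -
  have "pq_mul n f (vtx t) (v, as) = (\<Sum>k\<in>{0..length as}. f (v, take k as) * vtx t (pend n v (take k as), drop k as))"
    by (simp add: pq_mul_def)
  also have "\<dots> = f (v, take (length as) as) * vtx t (pend n v (take (length as) as), drop (length as) as)"
    by (rule sum_single) (auto simp: vtx_apply)
  finally show ?thesis by (simp add: vtx_apply)
qed

lemma mul_add_left: "pq_mul n (f + h) k = pq_mul n f k + pq_mul n h k"
  by (auto simp: pq_mul_def fun_eq_iff distrib_right sum.distrib)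
lemma mul_add_right: "pq_mul n k (f + h) = pq_mul n k f + pq_mul n k h"
  by (auto simp: pq_mul_def fun_eq_iff distrib_left sum.distrib)
lemma mul_smul_left: "pq_mul n (smul c f) k = smul c (pq_mul n f k)"
  by (auto simp: pq_mul_def fun_eq_iff sum_distrib_left mult.assoc)
lemma mul_smul_right: "pq_mul n k (smul c f) = smul c (pq_mul n k f)"
  by (auto simp: pq_mul_def fun_eq_iff sum_distrib_left mult.assoc mult.left_commute)
lemma diff_eq_smul: "(f::'a \<Rightarrow> 'k::field) - h = f + smul (-1) h"
  by (auto simp: fun_eq_iff)
lemma mul_diff_left: "pq_mul n (f - h) k = pq_mul n f k - pq_mul n h k"
  by (simp add: diff_eq_smul mul_add_left mul_smul_left)
lemma mul_diff_right: "pq_mul n k (f - h) = pq_mul n k f - pq_mul n k h"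
  by (simp add: diff_eq_smul mul_add_right mul_smul_right)

lemma car_add: "f \<in> pq_carrier n \<Longrightarrow> h \<in> pq_carrier n \<Longrightarrow> f + h \<in> pq_carrier n"
proof -
  assume f: "f \<in> pq_carrier n" and h: "h \<in> pq_carrier n"
  have "{p. (f + h) p \<noteq> 0} \<subseteq> {p. f p \<noteq> 0} \<union> {p. h p \<noteq> 0}" by auto
  moreover have "finite ({p. f p \<noteq> 0} \<union> {p. h p \<noteq> 0})" using f h unfolding pq_carrier_def by simp
  ultimately have "finite {p. (f + h) p \<noteq> 0}" by (rule finite_subset)
  moreover have "\<forall>p. (f + h) p \<noteq> 0 \<longrightarrow> pvalid n (fst p) (snd p)"
  proof (intro allI impI)
    fix p assume "(f + h) p \<noteq> 0"
    then have "f p \<noteq> 0 \<or> h p \<noteq> 0" by auto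
    then show "pvalid n (fst p) (snd p)" using f h unfolding pq_carrier_def by auto
  qed
  ultimately show ?thesis unfolding pq_carrier_def by blast
qed

lemma car_smul: "f \<in> pq_carrier n \<Longrightarrow> smul c f \<in> pq_carrier n"
proof -
  assume f: "f \<in> pq_carrier n"
  have "{p. smul c f p \<noteq> 0} \<subseteq> {p. f p \<noteq> 0}" by auto
  then show ?thesis using f unfolding pq_carrier_def
    by (auto intro: finite_subset)
qed

lemma car_diff: "f \<in> pq_carrier n \<Longrightarrow> h \<in> pq_carrier n \<Longrightarrow> f - h \<in> pq_carrier n"
  by (simp add: diff_eq_smul car_add car_smul)

lemma vtx_car: "i < n \<Longrightarrow> vtx i \<in> pq_carrier n"
proof -
  assume "i < n"
  have "{p. vtx i p \<noteq> (0::'a)} = {(i, [])}" by (auto simp: vtx_def)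
  then show ?thesis unfolding pq_carrier_def using \<open>i < n\<close> by (auto simp: vtx_def)
qed

lemma asrc_lt: "0 < n \<Longrightarrow> aidx a < n \<Longrightarrow> asrc n a < n"
  by (cases a) auto
lemma atgt_lt: "0 < n \<Longrightarrow> aidx a < n \<Longrightarrow> atgt n a < n"
  by (cases a) auto

lemma arw_car: "0 < n \<Longrightarrow> aidx a < n \<Longrightarrow> arw n a \<in> pq_carrier n"
proof -
  assume n: "0 < n" and a: "aidx a < n"
  have "{p. arw n a p \<noteq> (0::'a)} = {(asrc n a, [a])}" by (auto simp: arw_def)
  then show ?thesis unfolding pq_carrier_def using asrc_lt[OF n a] atgt_lt[OF n a] a by (auto simp: arw_def)
qed

lemma lin_car: "lin_on n F \<Longrightarrow> f \<in> pq_carrier n \<Longrightarrow> F f \<in> pq_carrier n"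
  by (simp add: lin_on_def)
lemma lin_add: "lin_on n F \<Longrightarrow> f \<in> pq_carrier n \<Longrightarrow> h \<in> pq_carrier n \<Longrightarrow> F (f + h) = F f + F h"
  by (simp add: lin_on_def)
lemma lin_smul: "lin_on n F \<Longrightarrow> f \<in> pq_carrier n \<Longrightarrow> F (smul c f) = smul c (F f)"
  by (simp add: lin_on_def)
lemma lin_diff: "lin_on n F \<Longrightarrow> f \<in> pq_carrier n \<Longrightarrow> h \<in> pq_carrier n \<Longrightarrow> F (f - h) = F f - F h"
proof -
  assume F: "lin_on n F" and f: "f \<in> pq_carrier n" and h: "h \<in> pq_carrier n"
  have "F (f - h) = F (f + smul (-1) h)" by (simp add: diff_eq_smul)
  also have "\<dots> = F f + smul (-1) (F h)" using lin_add[OF F f car_smul[OF h]] lin_smul[OF F h] by simp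
  also have "\<dots> = F f - F h" by (simp add: diff_eq_smul)
  finally show ?thesis .
qed

lemma mul_vtx_arw: "pq_mul n (vtx (asrc n a)) (arw n a) = arw n a"
  by (auto simp: fun_eq_iff mul_vtx_left arw_apply)
lemma mul_arw_vtx: "pq_mul n (arw n a) (vtx (atgt n a)) = arw n a"
  by (auto simp: fun_eq_iff mul_vtx_right arw_apply)

lemma sucmod_inj: "0 < (n::nat) \<Longrightarrow> x < n \<Longrightarrow> y < n \<Longrightarrow> (x + 1) mod n = (y + 1) mod n \<Longrightarrow> x = y"
proof -
  assume n: "0 < n" and x: "x < n" and y: "y < n" and e: "(x + 1) mod n = (y + 1) mod n"
  have "x = vpred n ((x + 1) mod n)" using vpred_of_suc[OF n x] by simp
  also have "\<dots> = vpred n ((y + 1) mod n)" using e by simp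
  also have "\<dots> = y" using vpred_of_suc[OF n y] by simp
  finally show ?thesis .
qed




locale S =
  fixes n :: nat and lam :: "'k::field" and r m d :: nat
    and G X :: "(path \<Rightarrow> 'k) \<Rightarrow> (path \<Rightarrow> 'k)"
    and \<gamma> \<mu> \<mu>s :: "nat \<Rightarrow> 'k"
  assumes r_gt: "r > 1"
    and lam_root: "lam ^ r = 1" and lam_prim: "\<forall>k. 0 < k \<and> k < r \<longrightarrow> lam ^ k \<noteq> 1"
    and n_ge: "n \<ge> 3"
    and mu_nz: "\<forall>i<n. \<mu> i \<noteq> 0 \<and> \<mu>s i \<noteq> 0"
    and act: "taft_module_algebra n lam r m G X"
    and lin: "linear_action n G X"
    and g_vtx: "\<forall>i<n. G (vtx i) = vtx (rf n d i)"
    and g_arr: "\<forall>i<n. G (arw n (Arr i)) = smul (\<mu> i) (arw n (ArrS (rf n d (i + 1))))"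
    and g_arrS: "\<forall>i<n. G (arw n (ArrS i)) = smul (\<mu>s i) (arw n (Arr (rf n d (i + 1))))"
    and gamma: "\<forall>i<n. X (vtx i) = smul (\<gamma> i) (vtx i) - smul (\<gamma> i * inverse lam) (vtx (rf n d i))"
begin

lemma n0: "0 < n" using n_ge by simp

lemma lam_nz: "lam \<noteq> 0"
  using lam_root r_gt by (metis one_neq_zero power_0_left not_one_less_zero neq0_conv less_trans zero_less_one)

lemma lam_ne1: "lam \<noteq> 1" using lam_prim r_gt by (metis power_one_right zero_less_one)

lemma Glin: "lin_on n G" using act by (simp add: taft_module_algebra_def)
lemma Xlin: "lin_on n X" using act by (simp add: taft_module_algebra_def)

lemma comm: "f \<in> pq_carrier n \<Longrightarrow> G (X f) = smul lam (X (G f))"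
  using act by (simp add: taft_module_algebra_def)

lemma Xmul: "f \<in> pq_carrier n \<Longrightarrow> h \<in> pq_carrier n \<Longrightarrow>
   X (pq_mul n f h) = pq_mul n f (X h) + pq_mul n (X f) (G h)"
  using act by (simp add: taft_module_algebra_def)

lemma r2: "lam ^ 2 = 1 \<Longrightarrow> r = 2"
proof (rule ccontr)
  assume l: "lam ^ 2 = 1" and "r \<noteq> 2"
  then have "2 < r" using r_gt by simp
  then show False using lam_prim l by auto
qed

lemma lam_m1: "lam ^ 2 = 1 \<Longrightarrow> lam = -1"
proof -
  assume l: "lam ^ 2 = 1"
  then have "(lam - 1) * (lam + 1) = 0" by (simp add: algebra_simps power2_eq_square)
  then show ?thesis using lam_ne1 by (simp add: eq_neg_iff_add_eq_0)
qed

lemma XX0: "lam ^ 2 = 1 \<Longrightarrow> f \<in> pq_carrier n \<Longrightarrow> X (X f) = 0"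
proof -
  assume l: "lam ^ 2 = 1" and f: "f \<in> pq_carrier n"
  have "(X ^^ r) f = 0" using act f by (simp add: taft_module_algebra_def)
  then show ?thesis using r2[OF l] by (simp add: numeral_2_eq_2)
qed

lemma Xlen: "aidx b < n \<Longrightarrow> len_le 1 (X (arw n b))"
  using lin by (cases b) (auto simp: linear_action_def)

lemma Xv: "i < n \<Longrightarrow> X (vtx i) = smul (\<gamma> i) (vtx i) - smul (\<gamma> i * inverse lam) (vtx (rf n d i))"
  using gamma by simp

lemma gamma_rel: "i < n \<Longrightarrow> \<gamma> i = lam * \<gamma> (rf n d i)"
proof -
  assume i: "i < n"
  define j where "j = rf n d i"
  have j: "j < n" unfolding j_def by (rule rf_lt[OF n0])
  have jj: "rf n d j = i" unfolding j_def by (rule rf_rf[OF n0 i])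
  have Gv: "G (vtx i) = vtx j" "G (vtx j) = vtx i" using g_vtx i j jj j_def by auto
  have "G (X (vtx i)) = smul (\<gamma> i) (vtx j) - smul (\<gamma> i * inverse lam) (vtx i)"
    using Xv[OF i] Gv lin_diff[OF Glin car_smul[OF vtx_car[OF i]] car_smul[OF vtx_car[OF j]]]
      lin_smul[OF Glin vtx_car[OF i]] lin_smul[OF Glin vtx_car[OF j]] j_def by simp
  moreover have "X (G (vtx i)) = smul (\<gamma> j) (vtx j) - smul (\<gamma> j * inverse lam) (vtx i)"
    using Xv[OF j] Gv jj by simp
  moreover note comm[OF vtx_car[OF i]]
  ultimately have E: "smul (\<gamma> i) (vtx j) - smul (\<gamma> i * inverse lam) (vtx i)
     = smul lam (smul (\<gamma> j) (vtx j) - smul (\<gamma> j * inverse lam) (vtx i))" by simp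
  note E2 = fun_cong[OF E, of "(j, [])"]
  show ?thesis
  proof (cases "j = i")
    case False
    then show ?thesis using E2 j_def by (simp add: vtx_apply)
  next
    case True
    then have "\<gamma> i - \<gamma> i * inverse lam = lam * (\<gamma> i - \<gamma> i * inverse lam)"
      using E2 by (simp add: vtx_apply)
    then have "(1 - lam) * (\<gamma> i - \<gamma> i * inverse lam) = 0" by (simp add: algebra_simps)
    then have "\<gamma> i - \<gamma> i * inverse lam = 0" using lam_ne1 by simp
    then have "\<gamma> i * (1 - inverse lam) = 0" by (simp add: algebra_simps)
    moreover have "1 - inverse lam \<noteq> 0" using lam_ne1 lam_nz
      by (metis eq_iff_diff_eq_0 inverse_1 inverse_inverse_eq)
    ultimately have "\<gamma> i = 0" by simp
    then show ?thesis using True j_def by simp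
  qed
qed

lemma gamma_fix: "i < n \<Longrightarrow> rf n d i = i \<Longrightarrow> \<gamma> i = 0"
proof -
  assume i: "i < n" and f: "rf n d i = i"
  have "\<gamma> i = lam * \<gamma> i" using gamma_rel[OF i] f by simp
  then have "(1 - lam) * \<gamma> i = 0" by (simp add: algebra_simps)
  then show ?thesis using lam_ne1 by simp
qed

lemma gamma_sq: "lam ^ 2 = 1 \<Longrightarrow> i < n \<Longrightarrow> \<gamma> (rf n d i) ^ 2 = \<gamma> i ^ 2"
proof -
  assume l: "lam ^ 2 = 1" and i: "i < n"
  have "\<gamma> i ^ 2 = lam ^ 2 * \<gamma> (rf n d i) ^ 2" using gamma_rel[OF i] by (simp add: power_mult_distrib)
  then show ?thesis using l by simp
qed

lemma all_zero: "lam ^ 2 \<noteq> 1 \<Longrightarrow> i < n \<Longrightarrow> \<gamma> i = 0"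
proof -
  assume l: "lam ^ 2 \<noteq> 1" and i: "i < n"
  have "\<gamma> i = lam * (lam * \<gamma> (rf n d (rf n d i)))"
    using gamma_rel[OF i] gamma_rel[OF rf_lt[OF n0], of d i] by simp
  then have "\<gamma> i = lam ^ 2 * \<gamma> i" using rf_rf[OF n0 i] by (simp add: power2_eq_square)
  then have "(1 - lam ^ 2) * \<gamma> i = 0" by (simp add: algebra_simps)
  then show ?thesis using l by simp
qed

end



context S begin

lemma DL:
  assumes b: "aidx b < n" and s: "s = asrc n b" and t: "t = atgt n b"
    and sf: "rf n d s \<noteq> s" and tf: "rf n d t \<noteq> t"
    and noarr: "\<forall>b'. aidx b' < n \<and> asrc n b' = s \<longrightarrow> atgt n b' \<noteq> rf n d t"
    and Gsupp: "\<forall>p. G (arw n b) p \<noteq> 0 \<longrightarrow> fst p = rf n d s"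
  shows "X (arw n b) (v, as) = (if (v, as) = (s, []) then X (arw n b) (s, []) else 0)
           + \<gamma> t * arw n b (v, as) - \<gamma> s * inverse lam * G (arw n b) (v, as)"
proof -
  let ?B = "arw n b :: path \<Rightarrow> 'k"
  have sn: "s < n" using asrc_lt[OF n0 b] s by simp
  have tn: "t < n" using atgt_lt[OF n0 b] t by simp
  have Bc: "?B \<in> pq_carrier n" by (rule arw_car[OF n0 b])
  have F1: "X ?B = pq_mul n (vtx s) (X ?B) + pq_mul n (X (vtx s)) (G ?B)"
  proof -
    have "X ?B = X (pq_mul n (vtx s) ?B)" using s by (simp add: mul_vtx_arw)
    also have "\<dots> = pq_mul n (vtx s) (X ?B) + pq_mul n (X (vtx s)) (G ?B)" by (rule Xmul[OF vtx_car[OF sn] Bc])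
    finally show ?thesis .
  qed
  have F2: "X ?B = pq_mul n ?B (X (vtx t)) + pq_mul n (X ?B) (vtx (rf n d t))"
  proof -
    have "X ?B = X (pq_mul n ?B (vtx t))" using t by (simp add: mul_arw_vtx)
    also have "\<dots> = pq_mul n ?B (X (vtx t)) + pq_mul n (X ?B) (G (vtx t))" by (rule Xmul[OF Bc vtx_car[OF tn]])
    finally show ?thesis using g_vtx tn by simp
  qed
  have e1: "X ?B (v, as) = (if v = s then X ?B (v, as) else 0)
      + (\<gamma> s * (if v = s then G ?B (v, as) else 0) - \<gamma> s * inverse lam * (if v = rf n d s then G ?B (v, as) else 0))"
    using fun_cong[OF F1, of "(v, as)"] Xv[OF sn]
    by (simp add: mul_diff_left mul_smul_left mul_vtx_left)
  have e2: "X ?B (v, as) = (\<gamma> t * (if pend n v as = t then ?B (v, as) else 0)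
      - \<gamma> t * inverse lam * (if pend n v as = rf n d t then ?B (v, as) else 0))
      + (if pend n v as = rf n d t then X ?B (v, as) else 0)"
    using fun_cong[OF F2, of "(v, as)"] Xv[OF tn]
    by (simp add: mul_diff_right mul_smul_right mul_vtx_right)
  have Bp: "?B (v, as) \<noteq> 0 \<Longrightarrow> v = s \<and> as = [b]" using s by (simp add: arw_apply split: if_splits)
  have pB: "pend n s [b] = t" using s t by simp
  have Gp: "G ?B (v, as) \<noteq> 0 \<Longrightarrow> v = rf n d s" using Gsupp by fastforce
  show ?thesis
  proof (cases "v = s")
    case False
    then have "?B (v, as) = 0" using Bp by blast
    moreover have "G ?B (v, as) = (if v = rf n d s then G ?B (v, as) else 0)" using Gp by auto
    ultimately show ?thesis using e1 False by simp
  next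
    case vs: True
    then have G0: "G ?B (v, as) = 0" using Gp sf by auto
    show ?thesis
    proof (cases "as = []")
      case True then show ?thesis using vs G0 Bp by auto
    next
      case ne: False
      show ?thesis
      proof (cases "pend n v as = rf n d t")
        case False
        then have "X ?B (v, as) = \<gamma> t * ?B (v, as)"
          using e2 Bp pB tf vs by (cases "?B (v, as) = 0") auto
        then show ?thesis using ne G0 by simp
      next
        case True
        have B0: "?B (v, as) = 0"
        proof (rule ccontr)
          assume "?B (v, as) \<noteq> 0"
          then have "as = [b]" using Bp vs by auto
          then have "pend n v as = t" using pB vs by simp
          then show False using True tf by simp
        qed
        have "X ?B (v, as) = 0"
        proof (rule ccontr)
          assume nz: "X ?B (v, as) \<noteq> 0"
          then have "length as \<le> 1" using Xlen[OF b] unfolding len_le_def by fastforce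
          then obtain b' where as: "as = [b']" using ne by (cases as) auto
          have "X ?B \<in> pq_carrier n" by (rule lin_car[OF Xlin Bc])
          then have "pvalid n v as" using nz unfolding pq_carrier_def by fastforce
          then have "aidx b' < n \<and> asrc n b' = s \<and> atgt n b' = rf n d t"
            using as vs True by simp
          then show False using noarr by blast
        qed
        then show ?thesis using B0 G0 ne by simp
      qed
    qed
  qed
qed

lemma DLf:
  assumes b: "aidx b < n" and s: "s = asrc n b" and t: "t = atgt n b"
    and sf: "rf n d s \<noteq> s" and tf: "rf n d t \<noteq> t"
    and noarr: "\<forall>b'. aidx b' < n \<and> asrc n b' = s \<longrightarrow> atgt n b' \<noteq> rf n d t"
    and Gsupp: "\<forall>p. G (arw n b) p \<noteq> 0 \<longrightarrow> fst p = rf n d s"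
  shows "X (arw n b) = smul (X (arw n b) (s, [])) (vtx s) + smul (\<gamma> t) (arw n b)
           - smul (\<gamma> s * inverse lam) (G (arw n b))"
proof (rule ext)
  fix p :: path
  obtain v as where p: "p = (v, as)" by (cases p)
  show "X (arw n b) p = (smul (X (arw n b) (s, [])) (vtx s) + smul (\<gamma> t) (arw n b)
           - smul (\<gamma> s * inverse lam) (G (arw n b))) p"
    unfolding p using DL[OF assms, of v as] by (simp add: vtx_apply)
qed

end



context S begin

lemma square_rel:
  assumes l: "lam ^ 2 = 1"
    and b: "aidx b < n" and b': "aidx b' < n" and s: "s = asrc n b" and t: "t = atgt n b"
    and sf: "rf n d s \<noteq> s" and tf: "rf n d t \<noteq> t"
    and noarr: "\<forall>b''. aidx b'' < n \<and> asrc n b'' = s \<longrightarrow> atgt n b'' \<noteq> rf n d t"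
    and noarr': "\<forall>b''. aidx b'' < n \<and> asrc n b'' = rf n d s \<longrightarrow> atgt n b'' \<noteq> t"
    and src': "asrc n b' = rf n d s" and tgt': "atgt n b' = rf n d t"
    and Gb: "G (arw n b) = smul m1 (arw n b')" and Gb': "G (arw n b') = smul m2 (arw n b)"
    and bb: "b \<noteq> b'"
  shows "\<gamma> t ^ 2 = m1 * m2 * \<gamma> s ^ 2"
proof -
  let ?A = "arw n b :: path \<Rightarrow> 'k"
  let ?A' = "arw n b' :: path \<Rightarrow> 'k"
  have sn: "s < n" using asrc_lt[OF n0 b] s by simp
  have tn: "t < n" using atgt_lt[OF n0 b] t by simp
  have rs: "rf n d (rf n d s) = s" by (rule rf_rf[OF n0 sn])
  have rt: "rf n d (rf n d t) = t" by (rule rf_rf[OF n0 tn])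
  have Ac: "?A \<in> pq_carrier n" by (rule arw_car[OF n0 b])
  have A'c: "?A' \<in> pq_carrier n" by (rule arw_car[OF n0 b'])
  have Gs: "\<forall>p. G ?A p \<noteq> 0 \<longrightarrow> fst p = rf n d s"
    using Gb src' by (auto simp: arw_def split: if_splits)
  have Gs': "\<forall>p. G ?A' p \<noteq> 0 \<longrightarrow> fst p = rf n d (rf n d s)"
    using Gb' s rs by (auto simp: arw_def split: if_splits)
  have sf': "rf n d (rf n d s) \<noteq> rf n d s" using rs sf by simp
  have tf': "rf n d (rf n d t) \<noteq> rf n d t" using rt tf by simp
  have noarr'': "\<forall>b''. aidx b'' < n \<and> asrc n b'' = rf n d s \<longrightarrow> atgt n b'' \<noteq> rf n d (rf n d t)"
    using noarr' rt by simp
  note DLA = DL[OF b s t sf tf noarr Gs]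
  note DLA' = DL[OF b' src'[symmetric] tgt'[symmetric] sf' tf' noarr'' Gs']
  define \<alpha> where "\<alpha> = X ?A (s, [])"
  have XA: "X ?A = smul \<alpha> (vtx s) + smul (\<gamma> t) ?A - smul (\<gamma> s * inverse lam) (G ?A)"
    unfolding \<alpha>_def by (rule DLf[OF b s t sf tf noarr Gs])
  have GAc: "G ?A \<in> pq_carrier n" by (rule lin_car[OF Glin Ac])
  have vc: "vtx s \<in> pq_carrier n" by (rule vtx_car[OF sn])
  have "X (X ?A) = X (smul \<alpha> (vtx s) + smul (\<gamma> t) ?A - smul (\<gamma> s * inverse lam) (G ?A))"
    using XA by simp
  also have "\<dots> = smul \<alpha> (X (vtx s)) + smul (\<gamma> t) (X ?A) - smul (\<gamma> s * inverse lam) (X (G ?A))"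
    by (simp add: lin_diff[OF Xlin] lin_add[OF Xlin] lin_smul[OF Xlin] car_add car_smul vc Ac GAc)
  also have "X (G ?A) = smul m1 (X ?A')" unfolding Gb by (rule lin_smul[OF Xlin A'c])
  finally have XXA: "X (X ?A) = smul \<alpha> (X (vtx s)) + smul (\<gamma> t) (X ?A) - smul (\<gamma> s * inverse lam) (smul m1 (X ?A'))" .
  have pA: "X (X ?A) (s, [b]) = 0" using XX0[OF l Ac] by simp
  have v0: "X (vtx s) (s, [b]) = 0" using Xv[OF sn] by (simp add: vtx_apply)
  have x1: "X ?A (s, [b]) = \<gamma> t"
    using DLA[of s "[b]"] Gb bb s by (simp add: arw_apply)
  have x2: "X ?A' (s, [b]) = - (\<gamma> (rf n d s) * inverse lam * m2)"
    using DLA'[of s "[b]"] Gb' bb s sf by (simp add: arw_apply)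
  have "0 = \<gamma> t * \<gamma> t + \<gamma> s * inverse lam * m1 * (\<gamma> (rf n d s) * inverse lam * m2)"
    using fun_cong[OF XXA, of "(s, [b])"] pA v0 x1 x2 by (simp add: algebra_simps)
  moreover have "lam = -1" by (rule lam_m1[OF l])
  moreover have "\<gamma> (rf n d s) = - \<gamma> s" using gamma_rel[OF sn] lam_m1[OF l] by simp
  ultimately have "0 = \<gamma> t * \<gamma> t - \<gamma> s * \<gamma> s * m1 * m2" by (simp add: algebra_simps)
  then show ?thesis by (simp add: power2_eq_square algebra_simps)
qed

end



context S begin

lemma clause2a:
  assumes l: "lam ^ 2 = 1" and i: "i < n" and fi: "rf n d i \<noteq> i"
    and fi1: "rf n d ((i + 1) mod n) \<noteq> (i + 1) mod n"
  shows "\<gamma> ((i + 1) mod n) ^ 2 = \<mu> i * \<mu>s (rf n d (i + 1)) * \<gamma> i ^ 2"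
proof -
  define k where "k = rf n d (i + 1)"
  define t where "t = (i + 1) mod n"
  have kn: "k < n" unfolding k_def by (rule rf_lt[OF n0])
  have tn: "t < n" unfolding t_def using n0 by simp
  have rt: "rf n d t = k" unfolding t_def k_def by (rule rf_mod[OF n0])
  have k1: "(k + 1) mod n = rf n d i" unfolding k_def by (rule rf_suc[OF n0])
  have rk1: "rf n d (k + 1) = i" using rf_mod[OF n0, of d "k + 1"] k1 rf_rf[OF n0 i] by simp
  have tf: "rf n d t \<noteq> t" using fi1 t_def by simp
  have noarr: "\<forall>b''. aidx b'' < n \<and> asrc n b'' = i \<longrightarrow> atgt n b'' \<noteq> rf n d t"
  proof (intro allI impI)
    fix b'' assume h: "aidx b'' < n \<and> asrc n b'' = i"
    show "atgt n b'' \<noteq> rf n d t"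
    proof (cases b'')
      case (Arr x) then show ?thesis using h tf t_def by auto
    next
      case (ArrS x) then show ?thesis using h rt k1 fi by auto
    qed
  qed
  have noarr': "\<forall>b''. aidx b'' < n \<and> asrc n b'' = rf n d i \<longrightarrow> atgt n b'' \<noteq> t"
  proof (intro allI impI)
    fix b'' assume h: "aidx b'' < n \<and> asrc n b'' = rf n d i"
    show "atgt n b'' \<noteq> t"
    proof (cases b'')
      case (Arr x)
      show ?thesis
      proof
        assume "atgt n b'' = t"
        then have "(rf n d i + 1) mod n = (i + 1) mod n" using Arr h t_def by simp
        then have "rf n d i = i" using sucmod_inj[OF n0 rf_lt[OF n0] i] by blast
        then show False using fi by simp
      qed
    next
      case (ArrS x)
      show ?thesis
      proof
        assume "atgt n b'' = t"
        then have "(t + 1) mod n = (k + 1) mod n" using ArrS h k1 by simp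
        then have "t = k" using sucmod_inj[OF n0 tn kn] by blast
        then show False using tf rt by simp
      qed
    qed
  qed
  have "\<gamma> t ^ 2 = \<mu> i * \<mu>s k * \<gamma> i ^ 2"
  proof (rule square_rel[OF l, of "Arr i" "ArrS k"])
    show "aidx (Arr i) < n" using i by simp
    show "aidx (ArrS k) < n" using kn by simp
    show "i = asrc n (Arr i)" by simp
    show "t = atgt n (Arr i)" using t_def by simp
    show "rf n d i \<noteq> i" by (rule fi)
    show "rf n d t \<noteq> t" by (rule tf)
    show "\<forall>b''. aidx b'' < n \<and> asrc n b'' = i \<longrightarrow> atgt n b'' \<noteq> rf n d t" by (rule noarr)
    show "\<forall>b''. aidx b'' < n \<and> asrc n b'' = rf n d i \<longrightarrow> atgt n b'' \<noteq> t" by (rule noarr')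
    show "asrc n (ArrS k) = rf n d i" using k1 by simp
    show "atgt n (ArrS k) = rf n d t" using rt by simp
    show "G (arw n (Arr i)) = smul (\<mu> i) (arw n (ArrS k))" using g_arr i k_def by simp
    show "G (arw n (ArrS k)) = smul (\<mu>s k) (arw n (Arr i))" using g_arrS kn rk1 by simp
    show "Arr i \<noteq> ArrS k" by simp
  qed
  then show ?thesis using t_def k_def by simp
qed

lemma clause2b:
  assumes l: "lam ^ 2 = 1" and i: "i < n" and fi: "rf n d i \<noteq> i"
    and fi1: "rf n d ((i + 1) mod n) \<noteq> (i + 1) mod n"
  shows "\<gamma> ((i + 1) mod n) ^ 2 = inverse (\<mu>s i * \<mu> (rf n d (i + 1))) * \<gamma> i ^ 2"
proof -
  define k where "k = rf n d (i + 1)"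
  define s where "s = (i + 1) mod n"
  have kn: "k < n" unfolding k_def by (rule rf_lt[OF n0])
  have sn: "s < n" unfolding s_def using n0 by simp
  have rs: "rf n d s = k" unfolding s_def k_def by (rule rf_mod[OF n0])
  have k1: "(k + 1) mod n = rf n d i" unfolding k_def by (rule rf_suc[OF n0])
  have rk1: "rf n d (k + 1) = i" using rf_mod[OF n0, of d "k + 1"] k1 rf_rf[OF n0 i] by simp
  have sf: "rf n d s \<noteq> s" using fi1 s_def by simp
  have noarr: "\<forall>b''. aidx b'' < n \<and> asrc n b'' = s \<longrightarrow> atgt n b'' \<noteq> rf n d i"
  proof (intro allI impI)
    fix b'' assume h: "aidx b'' < n \<and> asrc n b'' = s"
    show "atgt n b'' \<noteq> rf n d i"
    proof (cases b'')
      case (Arr x)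
      show ?thesis
      proof
        assume "atgt n b'' = rf n d i"
        then have "(s + 1) mod n = (k + 1) mod n" using Arr h k1 by simp
        then have "s = k" using sucmod_inj[OF n0 sn kn] by blast
        then show False using sf rs by simp
      qed
    next
      case (ArrS x)
      then have "(x + 1) mod n = (i + 1) mod n" "x < n" using h s_def by auto
      then have "x = i" using sucmod_inj[OF n0 _ i] by blast
      then show ?thesis using ArrS fi by simp
    qed
  qed
  have noarr': "\<forall>b''. aidx b'' < n \<and> asrc n b'' = rf n d s \<longrightarrow> atgt n b'' \<noteq> i"
  proof (intro allI impI)
    fix b'' assume h: "aidx b'' < n \<and> asrc n b'' = rf n d s"
    show "atgt n b'' \<noteq> i"
    proof (cases b'')
      case (Arr x) then show ?thesis using h rs k1 fi by auto
    next
      case (ArrS x)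
      show ?thesis
      proof
        assume "atgt n b'' = i"
        then have "k = s" using ArrS h rs s_def by simp
        then show False using sf rs by simp
      qed
    qed
  qed
  have "\<gamma> i ^ 2 = \<mu>s i * \<mu> k * \<gamma> s ^ 2"
  proof (rule square_rel[OF l, of "ArrS i" "Arr k"])
    show "aidx (ArrS i) < n" using i by simp
    show "aidx (Arr k) < n" using kn by simp
    show "s = asrc n (ArrS i)" using s_def by simp
    show "i = atgt n (ArrS i)" by simp
    show "rf n d s \<noteq> s" by (rule sf)
    show "rf n d i \<noteq> i" by (rule fi)
    show "\<forall>b''. aidx b'' < n \<and> asrc n b'' = s \<longrightarrow> atgt n b'' \<noteq> rf n d i" by (rule noarr)
    show "\<forall>b''. aidx b'' < n \<and> asrc n b'' = rf n d s \<longrightarrow> atgt n b'' \<noteq> i" by (rule noarr')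
    show "asrc n (Arr k) = rf n d s" using rs by simp
    show "atgt n (Arr k) = rf n d i" using k1 by simp
    show "G (arw n (ArrS i)) = smul (\<mu>s i) (arw n (Arr k))" using g_arrS i k_def by simp
    show "G (arw n (Arr k)) = smul (\<mu> k) (arw n (ArrS i))" using g_arr kn rk1 by simp
    show "ArrS i \<noteq> Arr k" by simp
  qed
  moreover have "\<mu>s i \<noteq> 0" "\<mu> k \<noteq> 0" using mu_nz i kn by auto
  ultimately show ?thesis using s_def k_def by (simp add: field_simps)
qed

end



context S begin

lemma Xpow_eig: "f \<in> pq_carrier n \<Longrightarrow> X f = smul a f \<Longrightarrow> (X ^^ k) f = smul (a ^ k) f"
proof (induction k)
  case 0 then show ?case by (simp add: smul_def)
next
  case (Suc k)
  have "(X ^^ Suc k) f = X ((X ^^ k) f)" by simp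
  also have "\<dots> = X (smul (a ^ k) f)" using Suc.IH[OF Suc.prems] by (simp del: smul_apply)
  also have "\<dots> = smul (a ^ k) (smul a f)" using lin_smul[OF Xlin Suc.prems(1)] Suc.prems(2) by (simp del: smul_apply)
  finally show ?case by (simp add: smul_def fun_eq_iff algebra_simps)
qed

lemma clause1:
  assumes j: "j < n" and fj: "rf n d j = j"
    and qa: "qsigma n lam \<gamma> G X (Arr j) = smul c (arw n (ArrS (vpred n j)))"
    and qb: "qsigma n lam \<gamma> G X (ArrS j) = smul cs (arw n (ArrS j))"
  shows "c ^ 2 = \<mu> j * inverse (\<mu>s (vpred n j)) * \<gamma> (vpred n j) ^ 2
       \<and> cs ^ 2 = \<mu>s j * \<mu> (vpred n j) * \<gamma> (vpred n j) ^ 2"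
proof -
  define vp where "vp = vpred n j"
  define t where "t = (j + 1) mod n"
  let ?A = "arw n (Arr j) :: path \<Rightarrow> 'k"
  let ?As = "arw n (ArrS vp) :: path \<Rightarrow> 'k"
  let ?B = "arw n (ArrS j) :: path \<Rightarrow> 'k"
  let ?Bv = "arw n (Arr vp) :: path \<Rightarrow> 'k"
  have vpn: "vp < n" unfolding vp_def by (rule vpred_lt[OF n0])
  have tn: "t < n" unfolding t_def using n0 by simp
  have rj1: "rf n d (j + 1) = vp" unfolding vp_def by (rule rf_fix_suc[OF n0 j fj])
  have vp1: "(vp + 1) mod n = j" unfolding vp_def by (rule vpred_suc[OF n0 j])
  have rvp1: "rf n d (vp + 1) = j" using rf_mod[OF n0, of d "vp + 1"] vp1 fj by simp
  have rt: "rf n d t = vp" unfolding t_def using rf_mod[OF n0, of d "j + 1"] rj1 by simp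
  have Ac: "?A \<in> pq_carrier n" by (intro arw_car[OF n0]) (simp add: j)
  have Asc: "?As \<in> pq_carrier n" by (intro arw_car[OF n0]) (simp add: vpn)
  have Bc: "?B \<in> pq_carrier n" by (intro arw_car[OF n0]) (simp add: j)
  have Bvc: "?Bv \<in> pq_carrier n" by (intro arw_car[OF n0]) (simp add: vpn)
  have GA: "G ?A = smul (\<mu> j) ?As" using g_arr j rj1 by simp
  have GAs: "G ?As = smul (\<mu>s vp) ?A" using g_arrS vpn rvp1 by simp
  have GB: "G ?B = smul (\<mu>s j) ?Bv" using g_arrS j rj1 by simp
  have GBv: "G ?Bv = smul (\<mu> vp) ?B" using g_arr vpn rvp1 by simp
  have mj: "\<mu> j \<noteq> 0" "\<mu>s j \<noteq> 0" "\<mu> vp \<noteq> 0" "\<mu>s vp \<noteq> 0" using mu_nz j vpn by auto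
  have gj: "\<gamma> j = 0" by (rule gamma_fix[OF j fj])
  have XA: "X ?A = smul c ?As + smul (\<gamma> t) ?A"
  proof (rule ext)
    fix p show "X ?A p = (smul c ?As + smul (\<gamma> t) ?A) p"
      using fun_cong[OF qa, of p] gj t_def vp_def unfolding qsigma_def by (simp add: diff_eq_eq)
  qed
  have XB: "X ?B = smul cs ?B - smul (\<gamma> t * inverse lam * \<mu>s j) ?Bv"
  proof (rule ext)
    fix p show "X ?B p = (smul cs ?B - smul (\<gamma> t * inverse lam * \<mu>s j) ?Bv) p"
      using fun_cong[OF qb, of p] gj t_def GB unfolding qsigma_def by (simp add: algebra_simps)
  qed
  have pA: "(j, [Arr j]) = (asrc n (Arr j), [Arr j])" by simp
  have pAs: "(j, [ArrS vp]) = (asrc n (ArrS vp), [ArrS vp])" using vp1 by simp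
  have pB: "(t, [ArrS j]) = (asrc n (ArrS j), [ArrS j])" using t_def by simp
  show ?thesis
  proof (cases "lam ^ 2 = 1")
    case l: True
    have lm: "lam = -1" by (rule lam_m1[OF l])
    have gsq: "\<gamma> t ^ 2 = \<gamma> vp ^ 2" using gamma_sq[OF l tn] rt by simp
    have "G (X ?A) = smul lam (X (G ?A))" by (rule comm[OF Ac])
    then have cA: "smul c (smul (\<mu>s vp) ?A) + smul (\<gamma> t) (smul (\<mu> j) ?As) = smul lam (smul (\<mu> j) (X ?As))"
      unfolding XA GA using lin_add[OF Glin car_smul[OF Asc] car_smul[OF Ac]] lin_smul[OF Glin Asc]
        lin_smul[OF Glin Ac] lin_smul[OF Xlin Asc] GA GAs by simp
    have e1: "c * \<mu>s vp = lam * (\<mu> j * X ?As (j, [Arr j]))"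
      using fun_cong[OF cA, of "(j, [Arr j])"] by (simp add: arw_apply)
    have "X (X ?A) = X (smul c ?As + smul (\<gamma> t) ?A)" using XA by simp
    also have "\<dots> = smul c (X ?As) + smul (\<gamma> t) (X ?A)"
      by (simp add: lin_add[OF Xlin car_smul[OF Asc] car_smul[OF Ac]] lin_smul[OF Xlin] Asc Ac)
    finally have "0 = c * X ?As (j, [Arr j]) + \<gamma> t * X ?A (j, [Arr j])"
      using fun_cong[OF XX0[OF l Ac], of "(j, [Arr j])"] by simp
    moreover have "X ?A (j, [Arr j]) = \<gamma> t" using XA by (simp add: arw_apply)
    ultimately have "0 = c * X ?As (j, [Arr j]) + \<gamma> t * \<gamma> t" by simp
    then have "0 = lam * \<mu> j * (c * X ?As (j, [Arr j])) + lam * \<mu> j * (\<gamma> t * \<gamma> t)"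
      by (metis distrib_left mult_zero_right)
    then have "0 = c * (c * \<mu>s vp) + lam * \<mu> j * (\<gamma> t * \<gamma> t)" using e1 by (simp add: algebra_simps)
    then have "c * c * \<mu>s vp = \<mu> j * (\<gamma> t * \<gamma> t)" using lm by (simp add: algebra_simps)
    then have P1: "c ^ 2 = \<mu> j * inverse (\<mu>s vp) * \<gamma> vp ^ 2" using mj gsq
      by (simp add: field_simps power2_eq_square)
    have "G (X ?B) = smul lam (X (G ?B))" by (rule comm[OF Bc])
    then have cB: "smul cs (smul (\<mu>s j) ?Bv) - smul (\<gamma> t * inverse lam * \<mu>s j) (smul (\<mu> vp) ?B)
        = smul lam (smul (\<mu>s j) (X ?Bv))"
      unfolding XB GB using lin_diff[OF Glin car_smul[OF Bc] car_smul[OF Bvc]] lin_smul[OF Glin Bc]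
        lin_smul[OF Glin Bvc] lin_smul[OF Xlin Bvc] GB GBv by simp
    have e2: "- (\<gamma> t * inverse lam * \<mu>s j * \<mu> vp) = lam * (\<mu>s j * X ?Bv (t, [ArrS j]))"
      using fun_cong[OF cB, of "(t, [ArrS j])"] t_def by (simp add: arw_apply)
    have "X (X ?B) = X (smul cs ?B - smul (\<gamma> t * inverse lam * \<mu>s j) ?Bv)" using XB by simp
    also have "\<dots> = smul cs (X ?B) - smul (\<gamma> t * inverse lam * \<mu>s j) (X ?Bv)"
      by (simp add: lin_diff[OF Xlin car_smul[OF Bc] car_smul[OF Bvc]] lin_smul[OF Xlin] Bc Bvc)
    finally have "0 = cs * X ?B (t, [ArrS j]) - (\<gamma> t * inverse lam * \<mu>s j) * X ?Bv (t, [ArrS j])"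
      using fun_cong[OF XX0[OF l Bc], of "(t, [ArrS j])"] by simp
    moreover have "X ?B (t, [ArrS j]) = cs" using XB t_def by (simp add: arw_apply)
    moreover have "X ?Bv (t, [ArrS j]) = - (\<gamma> t * \<mu> vp)"
    proof -
      have "\<mu>s j * X ?Bv (t, [ArrS j]) = \<mu>s j * (- (\<gamma> t * \<mu> vp))" using e2 lm by (simp add: algebra_simps)
      then show ?thesis using mj(2) mult_left_cancel by blast
    qed
    ultimately have "0 = cs * cs - (\<gamma> t * inverse lam * \<mu>s j) * (- (\<gamma> t * \<mu> vp))" by simp
    then have h: "cs * cs = (\<gamma> t * \<gamma> t) * (\<mu>s j * \<mu> vp)" using lm by (simp add: algebra_simps)
    then have "cs ^ 2 = \<gamma> t ^ 2 * (\<mu>s j * \<mu> vp)" by (simp only: power2_eq_square)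
    then have P2: "cs ^ 2 = \<mu>s j * \<mu> vp * \<gamma> vp ^ 2" using gsq by (simp add: ac_simps)
    show ?thesis using P1 P2 vp_def by simp
  next
    case l: False
    have g0: "\<gamma> t = 0" "\<gamma> vp = 0" using all_zero[OF l] tn vpn by auto
    have XB0: "X ?B = smul cs ?B" using XB g0 by (simp add: fun_eq_iff)
    have "(X ^^ r) ?B = 0" using act Bc by (simp add: taft_module_algebra_def)
    then have Z: "smul (cs ^ r) ?B = 0" using Xpow_eig[OF Bc XB0] by simp
    have "smul (cs ^ r) ?B (t, [ArrS j]) = (0 :: path \<Rightarrow> 'k) (t, [ArrS j])" using Z by (rule fun_cong)
    then have "cs ^ r = 0" using t_def by (simp add: arw_apply)
    then have cs0: "cs = 0" by simp
    have XA0: "X ?A = smul c ?As" using XA g0 by (simp add: fun_eq_iff)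
    have "G (X ?A) = smul lam (X (G ?A))" by (rule comm[OF Ac])
    then have "smul (c * \<mu>s vp) ?A = smul (lam * \<mu> j) (X ?As)"
      unfolding XA0 GA using lin_smul[OF Glin Asc] lin_smul[OF Xlin Asc] GAs by (simp add: fun_eq_iff mult.assoc)
    then have XAs: "X ?As = smul (c * \<mu>s vp * inverse (lam * \<mu> j)) ?A"
      using lam_nz mj by (auto simp: fun_eq_iff field_simps)
    have q1: "G (X ?As) (j, [ArrS vp]) = lam * X (G ?As) (j, [ArrS vp])" using comm[OF Asc] by simp
    have q2: "G (X ?As) (j, [ArrS vp]) = c * \<mu>s vp * inverse (lam * \<mu> j) * \<mu> j"
      using XAs lin_smul[OF Glin Ac] GA vp1 by (simp add: arw_apply)
    have q3: "X (G ?As) (j, [ArrS vp]) = \<mu>s vp * c"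
      using GAs lin_smul[OF Xlin Ac] XA0 vp1 by (simp add: arw_apply)
    have "c * \<mu>s vp * inverse (lam * \<mu> j) * \<mu> j = lam * \<mu>s vp * c"
      using q1 q2 q3 by (simp add: ac_simps)
    then have "c * \<mu>s vp * (inverse lam - lam) = 0" using mj lam_nz by (simp add: field_simps)
    moreover have "inverse lam - lam \<noteq> 0"
    proof
      assume "inverse lam - lam = 0"
      then have "lam * lam = 1" using lam_nz by (simp add: field_simps)
      then show False using l by (simp add: power2_eq_square)
    qed
    ultimately have c0: "c = 0" using mj by simp
    show ?thesis using c0 cs0 g0 vp_def by simp
  qed
qed

end



context S begin

lemma clause2:
  assumes i: "i < n" and fi: "rf n d i \<noteq> i" and fi1: "rf n d ((i + 1) mod n) \<noteq> (i + 1) mod n"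
  shows "\<gamma> ((i + 1) mod n) ^ 2 = (\<mu> i * \<mu>s (rf n d (i + 1))) * \<gamma> i ^ 2
        \<and> \<gamma> ((i + 1) mod n) ^ 2 = inverse (\<mu>s i * \<mu> (rf n d (i + 1))) * \<gamma> i ^ 2"
proof (cases "lam ^ 2 = 1")
  case True
  then show ?thesis using clause2a[OF True i fi fi1] clause2b[OF True i fi fi1] by simp
next
  case False
  have "(i + 1) mod n < n" using n0 by simp
  then show ?thesis using all_zero[OF False] i by simp
qed

lemma step1: "z < n \<Longrightarrow> rf n d z \<noteq> z \<Longrightarrow> \<gamma> z = 0 \<Longrightarrow> \<gamma> ((z + 1) mod n) = 0"
proof -
  assume z: "z < n" and f: "rf n d z \<noteq> z" and g: "\<gamma> z = 0"
  have zn: "(z + 1) mod n < n" using n0 by simp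
  show ?thesis
  proof (cases "rf n d ((z + 1) mod n) = (z + 1) mod n")
    case True then show ?thesis using gamma_fix[OF zn] by simp
  next
    case False
    then have "\<gamma> ((z + 1) mod n) ^ 2 = 0" using clause2[OF z f False] g by simp
    then show ?thesis by simp
  qed
qed

lemma step2: "z < n \<Longrightarrow> rf n d z = z \<Longrightarrow> \<gamma> (vpred n z) = 0 \<Longrightarrow> \<gamma> ((z + 1) mod n) = 0"
proof -
  assume z: "z < n" and f: "rf n d z = z" and g: "\<gamma> (vpred n z) = 0"
  have zn: "(z + 1) mod n < n" using n0 by simp
  have "rf n d ((z + 1) mod n) = vpred n z" using rf_mod[OF n0] rf_fix_suc[OF n0 z f] by simp
  then show ?thesis using gamma_rel[OF zn] g by simp
qed

lemma stepR: "y < n \<Longrightarrow> \<gamma> y = 0 \<Longrightarrow> \<gamma> ((y + 1) mod n) = 0 \<Longrightarrow> \<gamma> (((y + 1) mod n + 1) mod n) = 0"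
proof -
  assume y: "y < n" and g1: "\<gamma> y = 0" and g2: "\<gamma> ((y + 1) mod n) = 0"
  define z where "z = (y + 1) mod n"
  have zn: "z < n" unfolding z_def using n0 by simp
  have vz: "vpred n z = y" unfolding z_def by (rule vpred_of_suc[OF n0 y])
  show ?thesis
  proof (cases "rf n d z = z")
    case True then show ?thesis using step2[OF zn True] vz g1 z_def by simp
  next
    case False then show ?thesis using step1[OF zn False] g2 z_def by simp
  qed
qed

lemma clause3: "(\<forall>i<n. \<gamma> i = 0) \<or> (\<forall>i<n. rf n d i \<noteq> i \<longrightarrow> \<gamma> i \<noteq> 0)"
proof (rule ccontr)
  assume "\<not> ?thesis"
  then obtain k i0 where k: "k < n" "rf n d k \<noteq> k" "\<gamma> k = 0" and i0: "i0 < n" "\<gamma> i0 \<noteq> 0" by blast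
  have R: "\<gamma> ((k + t) mod n) = 0 \<and> \<gamma> (((k + t) mod n + 1) mod n) = 0" for t
  proof (induction t)
    case 0 then show ?case using k step1[OF k(1) k(2) k(3)] by simp
  next
    case (Suc t)
    have e: "((k + t) mod n + 1) mod n = (k + Suc t) mod n" by (simp add: mod_Suc_eq)
    have "(k + t) mod n < n" using n0 by simp
    then show ?case using stepR[of "(k + t) mod n"] Suc e by simp
  qed
  have "(k + (i0 + n - k)) mod n = i0" using k(1) i0(1) by simp
  then show False using R[of "i0 + n - k"] i0 by simp
qed

end


theorem lemma3p12:
  fixes lam :: "'k::field" and r m n d :: nat
    and G X :: "(path \<Rightarrow> 'k) \<Rightarrow> (path \<Rightarrow> 'k)"
    and \<gamma> \<mu> \<mu>s :: "nat \<Rightarrow> 'k"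
  assumes r_gt: "r > 1" and m_pos: "m > 0" and r_dvd: "r dvd m"
    and lam_root: "lam ^ r = 1" and lam_prim: "\<forall>k. 0 < k \<and> k < r \<longrightarrow> lam ^ k \<noteq> 1"
    and r_char: "of_nat r \<noteq> (0::'k)"
    and n_ge: "n \<ge> 3" and d_pos: "0 < d" and d_le: "d \<le> n - 1"
    and mu_nz: "\<forall>i<n. \<mu> i \<noteq> 0 \<and> \<mu>s i \<noteq> 0"
    and act: "taft_module_algebra n lam r m G X"
    and lin: "linear_action n G X"
    and inf: "inner_faithful n lam r m G X"
    and g_vtx: "\<forall>i<n. G (vtx i) = vtx (rf n d i)"
    and g_arr: "\<forall>i<n. G (arw n (Arr i)) = smul (\<mu> i) (arw n (ArrS (rf n d (i + 1))))"
    and g_arrS: "\<forall>i<n. G (arw n (ArrS i)) = smul (\<mu>s i) (arw n (Arr (rf n d (i + 1))))"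
    and gamma: "\<forall>i<n. X (vtx i) = smul (\<gamma> i) (vtx i) - smul (\<gamma> i * inverse lam) (vtx (rf n d i))"
  shows
    "(\<forall>j<n. rf n d j = j \<longrightarrow> (\<forall>c cs.
        qsigma n lam \<gamma> G X (Arr j) = smul c (arw n (ArrS (vpred n j)))
        \<and> qsigma n lam \<gamma> G X (ArrS j) = smul cs (arw n (ArrS j))
        \<longrightarrow> c ^ 2 = \<mu> j * inverse (\<mu>s (vpred n j)) * \<gamma> (vpred n j) ^ 2
          \<and> cs ^ 2 = \<mu>s j * \<mu> (vpred n j) * \<gamma> (vpred n j) ^ 2))
   \<and> (\<forall>i<n. rf n d i \<noteq> i \<and> rf n d ((i + 1) mod n) \<noteq> (i + 1) mod n \<longrightarrow>
        \<gamma> ((i + 1) mod n) ^ 2 = (\<mu> i * \<mu>s (rf n d (i + 1))) * \<gamma> i ^ 2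
        \<and> \<gamma> ((i + 1) mod n) ^ 2 = inverse (\<mu>s i * \<mu> (rf n d (i + 1))) * \<gamma> i ^ 2)
   \<and> ((\<forall>i<n. \<gamma> i = 0) \<or> (\<forall>i<n. rf n d i \<noteq> i \<longrightarrow> \<gamma> i \<noteq> 0))"
proof -
  interpret S n lam r m d G X \<gamma> \<mu> \<mu>s
    by unfold_locales (fact assms)+
  show ?thesis using clause1 clause2 clause3 by blast
qed

end
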